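(* For any connected graph $G$ of order $n\ge 3$, $3\le \gamma_{qtR}(G)\le n$. Moreover: (i) $\gamma_{qtR}(G)=3$ if and only if $G$ has maximum degree $n-1$; (ii) $\gamma_{qtR}(G)=4$ if and only if $\gamma(G)=\gamma_t(G)=2$; (iii) $\gamma_{qtR}(G)=n$ if and only if $G$ is a path or a cycle of order at least three.
   Context: All graphs are finite, simple and undirected; $\gamma(G)$ is the domination number and $\gamma_t(G)$ the total domination number (minimum size of a set $S$ such that every vertex has a neighbor in $S$). For $f:V(G)\to\{0,1,2\}$ write $V_i=\{v:f(v)=i\}$; weight $\omega(f)=|V_1|+2|V_2|$. A quasi-total Roman dominating function (QTRDF) is an $f$ such that every vertex labeled $0$ is adjacent to a vertex labeled $2$, and every vertex isolated in the subgraph induced by $V_1\cup V_2$ has label $1$; $\gamma_{qtR}(G)$ is the minimum weight of a QTRDF. *)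

theory Defs
  imports Main
begin

definition graph :: "'a set \<Rightarrow> ('a \<Rightarrow> 'a \<Rightarrow> bool) \<Rightarrow> bool" where
  "graph V E \<longleftrightarrow> finite V \<and>
     (\<forall>x y. E x y \<longrightarrow> x \<in> V \<and> y \<in> V \<and> x \<noteq> y \<and> E y x)"

definition connected_graph :: "'a set \<Rightarrow> ('a \<Rightarrow> 'a \<Rightarrow> bool) \<Rightarrow> bool" where
  "connected_graph V E \<longleftrightarrow> (\<forall>u\<in>V. \<forall>v\<in>V. E\<^sup>*\<^sup>* u v)"

definition nbhd :: "'a set \<Rightarrow> ('a \<Rightarrow> 'a \<Rightarrow> bool) \<Rightarrow> 'a \<Rightarrow> 'a set" where
  "nbhd V E v = {u \<in> V. E v u}"

definition max_degree :: "'a set \<Rightarrow> ('a \<Rightarrow> 'a \<Rightarrow> bool) \<Rightarrow> nat" where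
  "max_degree V E = Max ((\<lambda>v. card (nbhd V E v)) ` V)"

definition dominating_set :: "'a set \<Rightarrow> ('a \<Rightarrow> 'a \<Rightarrow> bool) \<Rightarrow> 'a set \<Rightarrow> bool" where
  "dominating_set V E S \<longleftrightarrow> S \<subseteq> V \<and> (\<forall>v\<in>V. v \<in> S \<or> (\<exists>u\<in>S. E v u))"

definition domination_number :: "'a set \<Rightarrow> ('a \<Rightarrow> 'a \<Rightarrow> bool) \<Rightarrow> nat" where
  "domination_number V E = (LEAST k. \<exists>S. dominating_set V E S \<and> card S = k)"

definition total_dominating_set :: "'a set \<Rightarrow> ('a \<Rightarrow> 'a \<Rightarrow> bool) \<Rightarrow> 'a set \<Rightarrow> bool" where
  "total_dominating_set V E S \<longleftrightarrow> S \<subseteq> V \<and> (\<forall>v\<in>V. \<exists>u\<in>S. E v u)"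

definition total_domination_number :: "'a set \<Rightarrow> ('a \<Rightarrow> 'a \<Rightarrow> bool) \<Rightarrow> nat" where
  "total_domination_number V E = (LEAST k. \<exists>S. total_dominating_set V E S \<and> card S = k)"

definition qtrdf :: "'a set \<Rightarrow> ('a \<Rightarrow> 'a \<Rightarrow> bool) \<Rightarrow> ('a \<Rightarrow> nat) \<Rightarrow> bool" where
  "qtrdf V E f \<longleftrightarrow>
     (\<forall>v\<in>V. f v \<le> 2) \<and>
     (\<forall>v\<in>V. f v = 0 \<longrightarrow> (\<exists>u\<in>V. E v u \<and> f u = 2)) \<and>
     (\<forall>v\<in>V. f v \<noteq> 0 \<and> \<not> (\<exists>u\<in>V. E v u \<and> f u \<noteq> 0) \<longrightarrow> f v = 1)"

definition weight :: "'a set \<Rightarrow> ('a \<Rightarrow> nat) \<Rightarrow> nat" where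
  "weight V f = (\<Sum>v\<in>V. f v)"

definition qtR_number :: "'a set \<Rightarrow> ('a \<Rightarrow> 'a \<Rightarrow> bool) \<Rightarrow> nat" where
  "qtR_number V E = (LEAST w. \<exists>f. qtrdf V E f \<and> weight V f = w)"

definition is_path_graph :: "'a set \<Rightarrow> ('a \<Rightarrow> 'a \<Rightarrow> bool) \<Rightarrow> bool" where
  "is_path_graph V E \<longleftrightarrow> (\<exists>xs. distinct xs \<and> set xs = V \<and>
     (\<forall>u v. E u v \<longleftrightarrow> (\<exists>i. Suc i < length xs \<and> {u, v} = {xs ! i, xs ! Suc i})))"

definition is_cycle_graph :: "'a set \<Rightarrow> ('a \<Rightarrow> 'a \<Rightarrow> bool) \<Rightarrow> bool" where
  "is_cycle_graph V E \<longleftrightarrow> (\<exists>xs. distinct xs \<and> set xs = V \<and> length xs \<ge> 3 \<and>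
     (\<forall>u v. E u v \<longleftrightarrow> ((\<exists>i. Suc i < length xs \<and> {u, v} = {xs ! i, xs ! Suc i})
                        \<or> {u, v} = {last xs, hd xs})))"

end

theory Submission imports Defs begin

locale G =
  fixes V :: "'a set" and E :: "'a \<Rightarrow> 'a \<Rightarrow> bool"
  assumes gr: "graph V E" and conn: "connected_graph V E" and n3: "card V \<ge> 3"
begin

lemma fin: "finite V" using gr unfolding graph_def by auto
lemma EV: "E x y \<Longrightarrow> x \<in> V \<and> y \<in> V \<and> x \<noteq> y" using gr unfolding graph_def by auto
lemma Esym: "E x y \<Longrightarrow> E y x" using gr unfolding graph_def by auto

lemma has_nb: assumes "v \<in> V" shows "\<exists>u\<in>V. E v u"
proof -
  have "card (V - {v}) \<ge> 2" using n3 fin assms by (simp add: card_Diff_singleton)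
  then obtain w where w: "w \<in> V" "w \<noteq> v"
    by (metis Diff_iff all_not_in_conv card.empty insertCI not_numeral_le_zero)
  have "E\<^sup>*\<^sup>* v w" using conn assms w unfolding connected_graph_def by auto
  then show ?thesis using w(2)
    by (metis EV converse_rtranclpE)
qed

lemma closed_all:
  assumes "S \<subseteq> V" "x \<in> S" "\<forall>u\<in>S. \<forall>y. E u y \<longrightarrow> y \<in> S"
  shows "S = V"
proof -
  have "v \<in> S" if "v \<in> V" for v
  proof -
    have "E\<^sup>*\<^sup>* x v" using conn assms that unfolding connected_graph_def by auto
    then show ?thesis by (induction rule: rtranclp_induct) (use assms in auto)
  qed
  then show ?thesis using assms by auto
qed

lemma nbhd_sub: "nbhd V E v \<subseteq> V - {v}" unfolding nbhd_def using EV by auto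
lemma nbhd_fin: "finite (nbhd V E v)" using nbhd_sub fin by (meson finite_Diff finite_subset)

definition full where "full v \<longleftrightarrow> v \<in> V \<and> (\<forall>u\<in>V. u \<noteq> v \<longrightarrow> E v u)"

lemma full_iff: "max_degree V E = card V - 1 \<longleftrightarrow> (\<exists>v. full v)"
proof
  assume a: "max_degree V E = card V - 1"
  have ne: "V \<noteq> {}" using n3 by auto
  have "max_degree V E \<in> (\<lambda>v. card (nbhd V E v)) ` V"
    unfolding max_degree_def using fin ne by (intro Max_in) auto
  then obtain v where v: "v \<in> V" "card (nbhd V E v) = card V - 1" using a by auto
  have "nbhd V E v = V - {v}"
    using v fin nbhd_sub[of v] by (intro card_subset_eq) (auto simp: card_Diff_singleton)
  then show "\<exists>v. full v" using v unfolding full_def nbhd_def by blast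
next
  assume "\<exists>v. full v"
  then obtain v where v: "full v" by auto
  have nv: "nbhd V E v = V - {v}" using v nbhd_sub[of v] unfolding full_def nbhd_def by auto
  show "max_degree V E = card V - 1"
    unfolding max_degree_def
  proof (rule Max_eqI)
    show "finite ((\<lambda>v. card (nbhd V E v)) ` V)" using fin by auto
    fix y assume "y \<in> (\<lambda>v. card (nbhd V E v)) ` V"
    then obtain u where "u \<in> V" "y = card (nbhd V E u)" by auto
    then show "y \<le> card V - 1" using nbhd_sub[of u] fin
      by (metis card_Diff_singleton card_mono finite_Diff)
  next
    have "card (nbhd V E v) = card V - 1" using v nv fin unfolding full_def
      by (auto simp: card_Diff_singleton)
    then show "card V - 1 \<in> (\<lambda>v. card (nbhd V E v)) ` V" using v unfolding full_def
      by (metis image_eqI)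
  qed
qed

lemma const1: "qtrdf V E (\<lambda>_. 1)" unfolding qtrdf_def by auto

lemma qtR_le: "qtrdf V E f \<Longrightarrow> qtR_number V E \<le> weight V f"
  unfolding qtR_number_def by (rule Least_le) auto

lemma qtR_ex: "\<exists>f. qtrdf V E f \<and> weight V f = qtR_number V E"
  unfolding qtR_number_def by (rule LeastI_ex) (use const1 in auto)

lemma qtR_le_n: "qtR_number V E \<le> card V"
  using qtR_le[OF const1] by (simp add: weight_def)

lemma weight_eq:
  assumes "qtrdf V E f"
  shows "weight V f = card {v\<in>V. f v \<noteq> 0} + card {v\<in>V. f v = 2}"
proof -
  have "weight V f = (\<Sum>v\<in>V. (if f v \<noteq> 0 then 1 else 0) + (if f v = 2 then 1 else 0))"
    unfolding weight_def
  proof (rule sum.cong)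
    fix v assume "v \<in> V"
    then have "f v \<le> 2" using assms unfolding qtrdf_def by auto
    then show "f v = (if f v \<noteq> 0 then 1 else 0) + (if f v = 2 then 1 else 0)" by auto
  qed simp
  also have "\<dots> = card {v\<in>V. f v \<noteq> 0} + card {v\<in>V. f v = 2}"
    using fin by (simp add: sum.distrib sum.inter_filter[symmetric])
  finally show ?thesis .
qed

lemma card_NZ_Z: "card {v\<in>V. f v \<noteq> 0} + card {v\<in>V. f v = 0} = card V"
proof -
  have "card V = card ({v\<in>V. f v \<noteq> 0} \<union> {v\<in>V. f v = 0})" by (rule arg_cong[where f=card]) auto
  also have "\<dots> = card {v\<in>V. f v \<noteq> 0} + card {v\<in>V. f v = 0}"
    using fin by (intro card_Un_disjoint) auto
  finally show ?thesis by simp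
qed

lemma two_nb:
  assumes "qtrdf V E f" "t \<in> V" "f t = 2"
  shows "\<exists>u\<in>V. E t u \<and> f u \<noteq> 0"
  using assms unfolding qtrdf_def by force

lemma zero_nb:
  assumes "qtrdf V E f" "v \<in> V" "f v = 0"
  shows "\<exists>u\<in>V. E v u \<and> f u = 2"
  using assms unfolding qtrdf_def by force

lemma weight_ge3:
  assumes f: "qtrdf V E f" shows "weight V f \<ge> 3"
proof (cases "\<exists>t\<in>V. f t = 2")
  case True
  then obtain t where t: "t \<in> V" "f t = 2" by auto
  obtain u where u: "u \<in> V" "E t u" "f u \<noteq> 0" using two_nb[OF f t] by auto
  have "t \<noteq> u" using EV u by auto
  have "{t,u} \<subseteq> {v\<in>V. f v \<noteq> 0}" using t u by auto
  then have "card {t,u} \<le> card {v\<in>V. f v \<noteq> 0}" using fin by (intro card_mono) auto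
  then have "card {v\<in>V. f v \<noteq> 0} \<ge> 2" using \<open>t \<noteq> u\<close> by auto
  moreover have "card {v\<in>V. f v = 2} \<ge> 1"
  proof -
    have "card {t} \<le> card {v\<in>V. f v = 2}" using t fin by (intro card_mono) auto
    then show ?thesis by simp
  qed
  ultimately show ?thesis using weight_eq[OF f] by auto
next
  case False
  then have "{v\<in>V. f v = 0} = {}" using zero_nb[OF f] by auto
  then have "card {v\<in>V. f v \<noteq> 0} = card V" using card_NZ_Z[of f] by (metis add.right_neutral card.empty)
  then show ?thesis using weight_eq[OF f] n3 by auto
qed

lemma qtR_ge3: "3 \<le> qtR_number V E"
  using qtR_ex weight_ge3 by metis

lemma three_full: assumes "card V = 3" shows "\<exists>v. full v"
proof -
  obtain a b c where V: "V = {a,b,c}" "a \<noteq> b" "b \<noteq> c" "a \<noteq> c"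
    using assms card_3_iff by metis
  have na: "E a b \<or> E a c" using has_nb[of a] V EV by auto
  have nb: "E b a \<or> E b c" using has_nb[of b] V EV by auto
  have nc: "E c a \<or> E c b" using has_nb[of c] V EV by auto
  have fa: "full a" if "E a b" "E a c" unfolding full_def using that V by auto
  have fb: "full b" if "E b a" "E b c" unfolding full_def using that V by auto
  have fc: "full c" if "E c a" "E c b" unfolding full_def using that V by auto
  show ?thesis
  proof (cases "E a b")
    case True
    show ?thesis
    proof (cases "E c a")
      case True then show ?thesis using fa \<open>E a b\<close> Esym by blast
    next
      case False then have "E c b" using nc by auto
      then show ?thesis using fb \<open>E a b\<close> Esym by blast
    qed
  next
    case False
    then have "E a c" using na by auto
    show ?thesis
    proof (cases "E b a")
      case True then show ?thesis using False Esym by blast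
    next
      case False then have "E b c" using nb by auto
      then show ?thesis using fc \<open>E a c\<close> Esym by blast
    qed
  qed
qed

lemma qtR3_full: assumes "qtR_number V E = 3" shows "\<exists>v. full v"
proof -
  obtain f where f: "qtrdf V E f" "weight V f = 3" using qtR_ex assms by auto
  show ?thesis
  proof (cases "\<exists>t\<in>V. f t = 2")
    case False
    then have "{v\<in>V. f v = 0} = {}" using zero_nb[OF f(1)] by auto
    then have a: "card {v\<in>V. f v \<noteq> 0} = card V" using card_NZ_Z[of f] by (metis add.right_neutral card.empty)
    have "{v\<in>V. f v = 2} = {}" using False by auto
    then have "card {v\<in>V. f v = 2} = 0" by (simp only: card.empty)
    then have "card V = 3" using weight_eq[OF f(1)] f(2) a by linarith
    then show ?thesis by (rule three_full)
  next
    case True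
    then obtain t where t: "t \<in> V" "f t = 2" by auto
    obtain u where u: "u \<in> V" "E t u" "f u \<noteq> 0" using two_nb[OF f(1) t] by auto
    have "t \<noteq> u" using EV u by auto
    have sub: "{t,u} \<subseteq> {v\<in>V. f v \<noteq> 0}" using t u by auto
    then have "card {t,u} \<le> card {v\<in>V. f v \<noteq> 0}" using fin by (intro card_mono) auto
    then have c2: "card {v\<in>V. f v \<noteq> 0} \<ge> 2" using \<open>t \<noteq> u\<close> by auto
    have subT: "{t} \<subseteq> {v\<in>V. f v = 2}" using t by auto
    then have "card {t} \<le> card {v\<in>V. f v = 2}" using fin by (intro card_mono) auto
    then have c1: "card {v\<in>V. f v = 2} \<ge> 1" by simp
    have s3: "card {v\<in>V. f v \<noteq> 0} + card {v\<in>V. f v = 2} = 3"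
      using weight_eq[OF f(1)] f(2) by linarith
    have e2: "card {v\<in>V. f v \<noteq> 0} = 2" and e1: "card {v\<in>V. f v = 2} = 1"
      using c1 c2 s3 by linarith+
    have NZ: "{v\<in>V. f v \<noteq> 0} = {t,u}"
      using sub e2 \<open>t \<noteq> u\<close> fin by (intro card_subset_eq[symmetric]) auto
    have T: "{v\<in>V. f v = 2} = {t}"
      using subT e1 fin by (intro card_subset_eq[symmetric]) auto
    have "E t w" if w: "w \<in> V" "w \<noteq> t" for w
    proof (cases "w = u")
      case True then show ?thesis using u by simp
    next
      case False
      then have "w \<notin> {v\<in>V. f v \<noteq> 0}" using NZ w by blast
      then have "f w = 0" using w by blast
      then obtain x where "x \<in> V" "E w x" "f x = 2" using zero_nb[OF f(1) w(1)] by auto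
      then have "x \<in> {v\<in>V. f v = 2}" by blast
      then have "x = t" using T by blast
      then show ?thesis using \<open>E w x\<close> Esym by auto
    qed
    then show ?thesis unfolding full_def using t by auto
  qed
qed

lemma full_qtR3: assumes "full v" shows "qtR_number V E = 3"
proof -
  have v: "v \<in> V" using assms unfolding full_def by auto
  obtain u where u: "u \<in> V" "E v u" using has_nb[OF v] by auto
  have "u \<noteq> v" using EV u by auto
  define f where "f = (\<lambda>x. if x = v then 2 else if x = u then 1 else (0::nat))"
  have fv: "f v = 2" and fu: "f u = 1" and fo: "\<And>x. x \<noteq> v \<Longrightarrow> x \<noteq> u \<Longrightarrow> f x = 0"
    using \<open>u \<noteq> v\<close> unfolding f_def by auto
  have Evx: "E x v" if "x \<in> V" "x \<noteq> v" for x using assms that Esym unfolding full_def by blast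
  have q: "qtrdf V E f" unfolding qtrdf_def
  proof (intro conjI ballI impI)
    fix x assume x: "x \<in> V" "f x = 0"
    then have "x \<noteq> v" using fv by auto
    then show "\<exists>y\<in>V. E x y \<and> f y = 2" using Evx[OF x(1)] v fv by blast
  next
    fix x assume x: "x \<in> V" "f x \<noteq> 0 \<and> \<not> (\<exists>y\<in>V. E x y \<and> f y \<noteq> 0)"
    show "f x = 1"
    proof (cases "x = v")
      case True then show ?thesis using x u fu by auto
    next
      case False
      then show ?thesis using x Evx[OF x(1)] v fv fo by force
    qed
  next
    fix x show "f x \<le> 2" unfolding f_def by auto
  qed
  have "{x\<in>V. f x \<noteq> 0} = {v,u}" using u v fv fu fo by force
  moreover have "{x\<in>V. f x = 2} = {v}" using u v fv fu fo by force
  ultimately have "weight V f = 3" using weight_eq[OF q] \<open>u \<noteq> v\<close> by simp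
  then show ?thesis using qtR_le[OF q] qtR_ge3 by auto
qed

lemma part1: "qtR_number V E = 3 \<longleftrightarrow> max_degree V E = card V - 1"
  using full_iff qtR3_full full_qtR3 by blast

lemma dom_small_full:
  assumes d: "dominating_set V E S" and c: "card S \<le> 1" shows "\<exists>v. full v"
proof -
  have SV: "S \<subseteq> V" using d unfolding dominating_set_def by auto
  have fS: "finite S" using SV fin finite_subset by auto
  have ne: "V \<noteq> {}" using n3 by auto
  show ?thesis
  proof (cases "card S = 0")
    case True
    then have "S = {}" using fS by auto
    then show ?thesis using d ne unfolding dominating_set_def by auto
  next
    case False
    then have "card S = 1" using c by auto
    then obtain s where s: "S = {s}" using card_1_singletonE by blast
    have "full s" unfolding full_def using SV s d Esym unfolding dominating_set_def by auto
    then show ?thesis by blast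
  qed
qed

lemma tds_ge2: assumes d: "total_dominating_set V E S" shows "card S \<ge> 2"
proof (rule ccontr)
  assume "\<not> card S \<ge> 2"
  then have c: "card S \<le> 1" by auto
  have SV: "S \<subseteq> V" using d unfolding total_dominating_set_def by auto
  have fS: "finite S" using SV fin finite_subset by auto
  have ne: "V \<noteq> {}" using n3 by auto
  show False
  proof (cases "card S = 0")
    case True
    then have "S = {}" using fS by auto
    then show ?thesis using d ne unfolding total_dominating_set_def by auto
  next
    case False
    then have "card S = 1" using c by auto
    then obtain s where s: "S = {s}" using card_1_singletonE by blast
    then have "s \<in> V" using SV by auto
    then have "E s s" using d s unfolding total_dominating_set_def by auto
    then show False using EV by auto
  qed
qed

lemma tds_V: "total_dominating_set V E V"
  unfolding total_dominating_set_def using has_nb by auto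

lemma tds_dom: "total_dominating_set V E S \<Longrightarrow> dominating_set V E S"
  unfolding total_dominating_set_def dominating_set_def by auto

lemma gamma2: "domination_number V E = 2 \<longleftrightarrow>
   (\<not> (\<exists>v. full v)) \<and> (\<exists>S. dominating_set V E S \<and> card S = 2)"
proof
  assume a: "domination_number V E = 2"
  have "\<exists>S. dominating_set V E S \<and> card S = domination_number V E"
    unfolding domination_number_def by (rule LeastI_ex) (use tds_dom[OF tds_V] in auto)
  then have ex: "\<exists>S. dominating_set V E S \<and> card S = 2" using a by auto
  have "\<not> (\<exists>v. full v)"
  proof
    assume "\<exists>v. full v"
    then obtain v where v: "full v" by auto
    have "dominating_set V E {v}" using v Esym unfolding full_def dominating_set_def by blast
    then have "domination_number V E \<le> 1" unfolding domination_number_def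
      by (intro Least_le) (rule exI[of _ "{v}"], auto)
    then show False using a by auto
  qed
  then show "(\<not> (\<exists>v. full v)) \<and> (\<exists>S. dominating_set V E S \<and> card S = 2)" using ex by auto
next
  assume a: "(\<not> (\<exists>v. full v)) \<and> (\<exists>S. dominating_set V E S \<and> card S = 2)"
  show "domination_number V E = 2" unfolding domination_number_def
  proof (rule Least_equality)
    show "\<exists>S. dominating_set V E S \<and> card S = 2" using a by auto
  next
    fix k assume "\<exists>S. dominating_set V E S \<and> card S = k"
    then obtain S where S: "dominating_set V E S" "card S = k" by auto
    show "2 \<le> k"
    proof (rule ccontr)
      assume "\<not> 2 \<le> k"
      then have "card S \<le> 1" using S by auto
      then show False using dom_small_full[OF S(1)] a by blast
    qed
  qed
qed

lemma gammat2: "total_domination_number V E = 2 \<longleftrightarrow> (\<exists>S. total_dominating_set V E S \<and> card S = 2)"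
proof
  assume a: "total_domination_number V E = 2"
  have "\<exists>S. total_dominating_set V E S \<and> card S = total_domination_number V E"
    unfolding total_domination_number_def by (rule LeastI_ex) (use tds_V in auto)
  then show "\<exists>S. total_dominating_set V E S \<and> card S = 2" using a by auto
next
  assume a: "\<exists>S. total_dominating_set V E S \<and> card S = 2"
  show "total_domination_number V E = 2" unfolding total_domination_number_def
  proof (rule Least_equality)
    show "\<exists>S. total_dominating_set V E S \<and> card S = 2" using a by auto
  next
    fix k assume "\<exists>S. total_dominating_set V E S \<and> card S = k"
    then show "2 \<le> k" using tds_ge2 by auto
  qed
qed

lemma gammas: "domination_number V E = 2 \<and> total_domination_number V E = 2 \<longleftrightarrow>
   (\<not> (\<exists>v. full v)) \<and> (\<exists>S. total_dominating_set V E S \<and> card S = 2)"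
  using gamma2 gammat2 tds_dom by blast

lemma tds2_qtR: assumes d: "total_dominating_set V E S" "card S = 2" shows "qtR_number V E \<le> 4"
proof -
  obtain a b where S: "S = {a,b}" "a \<noteq> b" using d(2) card_2_iff by metis
  have SV: "a \<in> V" "b \<in> V" using d(1) S unfolding total_dominating_set_def by auto
  have "\<exists>y\<in>S. E a y" using d(1) SV unfolding total_dominating_set_def by auto
  then have ab: "E a b" using S EV by auto
  define f where "f = (\<lambda>x. if x = a \<or> x = b then 2 else (0::nat))"
  have q: "qtrdf V E f" unfolding qtrdf_def
  proof (intro conjI ballI impI)
    fix x assume x: "x \<in> V" "f x = 0"
    obtain y where "y \<in> S" "E x y" using d(1) x(1) unfolding total_dominating_set_def by auto
    then show "\<exists>y\<in>V. E x y \<and> f y = 2" using S SV unfolding f_def by auto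
  next
    fix x assume x: "x \<in> V" "f x \<noteq> 0 \<and> \<not> (\<exists>y\<in>V. E x y \<and> f y \<noteq> 0)"
    then have "x = a \<or> x = b" unfolding f_def by (auto split: if_splits)
    then show "f x = 1" using x ab Esym[OF ab] SV unfolding f_def by auto
  next
    fix x show "f x \<le> 2" unfolding f_def by auto
  qed
  have "{x\<in>V. f x \<noteq> 0} = {a,b}" using SV unfolding f_def by auto
  moreover have "{x\<in>V. f x = 2} = {a,b}" using SV unfolding f_def by auto
  ultimately have "weight V f = 4" using weight_eq[OF q] S by simp
  then show ?thesis using qtR_le[OF q] by auto
qed

lemma four_tds: assumes c4: "card V = 4" shows "\<exists>S. total_dominating_set V E S \<and> card S = 2"
proof -
  obtain a where a: "a \<in> V" using c4 by fastforce
  obtain b where b: "b \<in> V" "E a b" using has_nb[OF a] by auto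
  have "a \<noteq> b" using EV b by auto
  show ?thesis
  proof (cases "total_dominating_set V E {a,b}")
    case True then show ?thesis using \<open>a \<noteq> b\<close> by (intro exI[of _ "{a,b}"]) auto
  next
    case False
    then obtain c where c: "c \<in> V" "\<not> E c a" "\<not> E c b"
      using a b unfolding total_dominating_set_def by auto
    have "c \<noteq> a" "c \<noteq> b" using c b Esym by auto
    have "card (V - {a,b,c}) = 1"
      using c4 a b c \<open>c \<noteq> a\<close> \<open>c \<noteq> b\<close> \<open>a \<noteq> b\<close> fin by (simp add: card_Diff_subset)
    then obtain d where d: "V - {a,b,c} = {d}" using card_1_singletonE by blast
    have V: "V = {a,b,c,d}" using d a b c by auto
    have dd: "d \<noteq> a" "d \<noteq> b" "d \<noteq> c" "d \<in> V" using d by auto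
    obtain y where y: "y \<in> V" "E c y" using has_nb[OF c(1)] by auto
    have "y \<noteq> c" using EV y by auto
    then have "y = d" using y V c Esym by auto
    then have cd: "E c d" using y by simp
    have "E d a \<or> E d b"
    proof (rule ccontr)
      assume nd: "\<not> (E d a \<or> E d b)"
      have "{c,d} = V"
      proof (rule closed_all)
        show "{c,d} \<subseteq> V" using c dd by auto
        show "c \<in> {c,d}" by simp
        show "\<forall>u\<in>{c,d}. \<forall>y. E u y \<longrightarrow> y \<in> {c, d}"
        proof (intro ballI allI impI)
          fix u y assume u: "u \<in> {c,d}" and e: "E u y"
          then have "y \<in> V" "y \<noteq> u" using EV by auto
          then show "y \<in> {c,d}" using u e V c nd Esym by auto
        qed
      qed
      then show False using a \<open>c \<noteq> a\<close> dd by auto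
    qed
    then show ?thesis
    proof
      assume da: "E d a"
      have "total_dominating_set V E {a,d}" unfolding total_dominating_set_def
        using V a dd da cd b Esym by auto
      then show ?thesis using dd by (intro exI[of _ "{a,d}"]) auto
    next
      assume db: "E d b"
      have "total_dominating_set V E {b,d}" unfolding total_dominating_set_def
        using V b dd db cd Esym by auto
      then show ?thesis using dd by (intro exI[of _ "{b,d}"]) auto
    qed
  qed
qed

lemma qtR4_tds: assumes a4: "qtR_number V E = 4" shows "\<exists>S. total_dominating_set V E S \<and> card S = 2"
proof -
  have nofull: "\<not> full v" for v using full_qtR3 a4 by auto
  obtain f where f: "qtrdf V E f" "weight V f = 4" using qtR_ex a4 by auto
  define NZ where "NZ = {v\<in>V. f v \<noteq> 0}"
  define T where "T = {v\<in>V. f v = 2}"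
  have s4: "card NZ + card T = 4" using weight_eq[OF f(1)] f(2) unfolding NZ_def T_def by linarith
  have fNZ: "finite NZ" "finite T" using fin unfolding NZ_def T_def by auto
  have TNZ: "T \<subseteq> NZ" unfolding NZ_def T_def by auto
  have zero: "E x t" if xx: "x \<in> V" "f x = 0" "T = {t}" for x t
  proof -
    obtain y where "y \<in> V" "E x y" "f y = 2" using zero_nb[OF f(1) xx(1,2)] by auto
    then have "y \<in> T" unfolding T_def by blast
    then show ?thesis using xx(3) \<open>E x y\<close> by blast
  qed
  show ?thesis
  proof (cases "T = {}")
    case True
    then have "{v\<in>V. f v = 0} = {}" using zero_nb[OF f(1)] unfolding T_def by auto
    then have "card NZ = card V" using card_NZ_Z[of f] unfolding NZ_def by (metis add.right_neutral card.empty)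
    moreover have "card T = 0" using True by (simp only: card.empty)
    ultimately have "card V = 4" using s4 by linarith
    then show ?thesis by (rule four_tds)
  next
    case False
    then obtain t where t: "t \<in> T" by auto
    then have t': "t \<in> V" "f t = 2" unfolding T_def by auto
    obtain u where u: "u \<in> V" "E t u" "f u \<noteq> 0" using two_nb[OF f(1) t'] by auto
    have "t \<noteq> u" using EV u by auto
    have "card T \<ge> 1" using t fNZ by (metis One_nat_def Suc_leI card_gt_0_iff empty_iff)
    moreover have "card T \<le> card NZ" using TNZ fNZ by (intro card_mono)
    ultimately have "card T = 1 \<or> card T = 2" using s4 by linarith
    then show ?thesis
    proof
      assume c2: "card T = 2"
      then have "card NZ = 2" using s4 by linarith
      then have NT: "NZ = T" using TNZ fNZ c2 by (metis card_subset_eq)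
      have "total_dominating_set V E T" unfolding total_dominating_set_def
      proof (intro conjI ballI)
        show "T \<subseteq> V" unfolding T_def by auto
        fix x assume x: "x \<in> V"
        show "\<exists>y\<in>T. E x y"
        proof (cases "f x = 0")
          case True
          obtain y where "y \<in> V" "E x y" "f y = 2" using zero_nb[OF f(1) x True] by auto
          then show ?thesis unfolding T_def by blast
        next
          case False
          then have "x \<in> T" using NT x unfolding NZ_def by blast
          then have "f x = 2" unfolding T_def by auto
          obtain y where "y \<in> V" "E x y" "f y \<noteq> 0" using two_nb[OF f(1) x \<open>f x = 2\<close>] by auto
          then have "y \<in> T" using NT unfolding NZ_def by blast
          then show ?thesis using \<open>E x y\<close> by blast
        qed
      qed
      then show ?thesis using c2 by blast
    next
      assume c1: "card T = 1"
      have T1: "T = {t}" using c1 t fNZ by (metis card_1_singletonE singletonD)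
      have "card NZ = 3" using s4 c1 by linarith
      have uNZ: "u \<in> NZ" "t \<in> NZ" using u t' unfolding NZ_def by auto
      have "card (NZ - {t,u}) = 1" using \<open>card NZ = 3\<close> uNZ \<open>t \<noteq> u\<close> fNZ
        by (simp add: card_Diff_subset)
      then obtain w where w: "NZ - {t,u} = {w}" using card_1_singletonE by blast
      have w': "w \<in> V" "w \<noteq> t" "w \<noteq> u" "f w \<noteq> 0" using w unfolding NZ_def by auto
      have others: "E y t" if "y \<in> V" "y \<noteq> t" "y \<noteq> u" "y \<noteq> w" for y
      proof -
        have "y \<notin> NZ" using w that by blast
        then have "f y = 0" using that(1) unfolding NZ_def by blast
        then show ?thesis using zero[OF that(1) _ T1] by blast
      qed
      have nwt: "\<not> E w t"
      proof
        assume "E w t"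
        have "full t" unfolding full_def
        proof (intro conjI ballI impI)
          show "t \<in> V" by (rule t')
          fix y assume "y \<in> V" "y \<noteq> t"
          then show "E t y" using others[of y] u \<open>E w t\<close> Esym by blast
        qed
        then show False using nofull by blast
      qed
      obtain x where x: "x \<in> V" "E w x" using has_nb[OF w'(1)] by auto
      have "x \<noteq> w" "x \<noteq> t" using EV x nwt by auto
      show ?thesis
      proof (cases "x = u")
        case True
        have "total_dominating_set V E {t,u}" unfolding total_dominating_set_def
        proof (intro conjI ballI)
          show "{t,u} \<subseteq> V" using t' u by auto
          fix y assume "y \<in> V"
          then show "\<exists>z\<in>{t,u}. E y z" using others[of y] u Esym x True by blast
        qed
        then show ?thesis using \<open>t \<noteq> u\<close> by (intro exI[of _ "{t,u}"]) auto
      next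
        case False
        then have xt: "E x t" using others[OF x(1)] \<open>x \<noteq> w\<close> \<open>x \<noteq> t\<close> by blast
        have "total_dominating_set V E {t,x}" unfolding total_dominating_set_def
        proof (intro conjI ballI)
          show "{t,x} \<subseteq> V" using t' x by auto
          fix y assume "y \<in> V"
          then show "\<exists>z\<in>{t,x}. E y z" using others[of y] u Esym x xt by blast
        qed
        then show ?thesis using \<open>x \<noteq> t\<close> by (intro exI[of _ "{t,x}"]) auto
      qed
    qed
  qed
qed

lemma part2: "qtR_number V E = 4 \<longleftrightarrow> domination_number V E = 2 \<and> total_domination_number V E = 2"
proof
  assume a: "qtR_number V E = 4"
  have "\<not> (\<exists>v. full v)" using full_qtR3 a by auto
  then show "domination_number V E = 2 \<and> total_domination_number V E = 2"
    using gammas qtR4_tds[OF a] by blast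
next
  assume "domination_number V E = 2 \<and> total_domination_number V E = 2"
  then have nf: "\<not> (\<exists>v. full v)" and ex: "\<exists>S. total_dominating_set V E S \<and> card S = 2"
    using gammas by auto
  have "qtR_number V E \<noteq> 3" using nf qtR3_full by blast
  moreover have "qtR_number V E \<le> 4" using ex tds2_qtR by blast
  ultimately show "qtR_number V E = 4" using qtR_ge3 by linarith
qed

lemma deg2_ge:
  assumes deg: "\<forall>v\<in>V. card (nbhd V E v) \<le> 2" and f: "qtrdf V E f"
  shows "weight V f \<ge> card V"
proof -
  define Z where "Z = {v\<in>V. f v = 0}"
  define T where "T = {v\<in>V. f v = 2}"
  define g where "g = (\<lambda>z. SOME t. t \<in> V \<and> E z t \<and> f t = 2)"
  have gz: "g z \<in> V \<and> E z (g z) \<and> f (g z) = 2" if "z \<in> Z" for z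
  proof -
    have "\<exists>t. t \<in> V \<and> E z t \<and> f t = 2" using zero_nb[OF f] that unfolding Z_def by auto
    then show ?thesis unfolding g_def by (rule someI_ex)
  qed
  have inj: "inj_on g Z"
  proof (rule inj_onI)
    fix z1 z2 assume z: "z1 \<in> Z" "z2 \<in> Z" "g z1 = g z2"
    show "z1 = z2"
    proof (rule ccontr)
      assume ne: "z1 \<noteq> z2"
      define t where "t = g z1"
      have t: "t \<in> V" "E z1 t" "E z2 t" "f t = 2" using gz[OF z(1)] gz[OF z(2)] z(3) unfolding t_def by auto
      obtain w where w: "w \<in> V" "E t w" "f w \<noteq> 0" using two_nb[OF f t(1) t(4)] by auto
      have "w \<noteq> z1" "w \<noteq> z2" using w z unfolding Z_def by auto
      have "{z1,z2,w} \<subseteq> nbhd V E t" using t w Esym EV unfolding nbhd_def by blast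
      then have "card {z1,z2,w} \<le> card (nbhd V E t)" using nbhd_fin by (intro card_mono) auto
      moreover have "card {z1,z2,w} = 3" using ne \<open>w \<noteq> z1\<close> \<open>w \<noteq> z2\<close> by auto
      ultimately show False using deg t(1) by fastforce
    qed
  qed
  have "g ` Z \<subseteq> T" using gz unfolding T_def by auto
  then have "card Z \<le> card T" using inj fin unfolding T_def by (intro card_inj_on_le) auto
  then show ?thesis using weight_eq[OF f] card_NZ_Z[of f] unfolding Z_def T_def by linarith
qed

lemma deg3_lt:
  assumes v: "v \<in> V" and c: "card (nbhd V E v) \<ge> 3"
  shows "qtR_number V E \<le> card V - 1"
proof -
  obtain S where S: "S \<subseteq> nbhd V E v" "card S = 3" using c by (meson obtain_subset_with_card_n)
  obtain a b cc where abc: "S = {a,b,cc}" "a \<noteq> b" "b \<noteq> cc" "a \<noteq> cc" using S(2) card_3_iff by metis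
  have nb: "a \<in> V" "b \<in> V" "cc \<in> V" "E v a" "E v b" "E v cc" using S abc unfolding nbhd_def by auto
  have nv: "a \<noteq> v" "b \<noteq> v" "cc \<noteq> v" using EV nb by auto
  define f where "f = (\<lambda>x. if x = v then 2 else if x = a \<or> x = b then 0 else (1::nat))"
  have q: "qtrdf V E f" unfolding qtrdf_def
  proof (intro conjI ballI impI)
    fix x assume x: "x \<in> V" "f x = 0"
    then have "x = a \<or> x = b" unfolding f_def by (auto split: if_splits)
    moreover have "f v = 2" unfolding f_def by simp
    ultimately show "\<exists>y\<in>V. E x y \<and> f y = 2" using v nb Esym by blast
  next
    fix x assume x: "x \<in> V" "f x \<noteq> 0 \<and> \<not> (\<exists>y\<in>V. E x y \<and> f y \<noteq> 0)"
    show "f x = 1"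
    proof (cases "x = v")
      case True
      have "f cc \<noteq> 0" using nv abc unfolding f_def by auto
      then show ?thesis using x True nb by blast
    next
      case False then show ?thesis using x unfolding f_def by auto
    qed
  next
    fix x show "f x \<le> 2" unfolding f_def by auto
  qed
  have "{x\<in>V. f x \<noteq> 0} = V - {a,b}" using nv unfolding f_def by auto
  moreover have "{x\<in>V. f x = 2} = {v}" using v unfolding f_def by auto
  moreover have "card (V - {a,b}) = card V - 2" using nb abc fin by (simp add: card_Diff_subset)
  ultimately have "weight V f = card V - 2 + 1" using weight_eq[OF q] by simp
  then show ?thesis using qtR_le[OF q] n3 by linarith
qed

lemma card2: "A \<subseteq> {p,q} \<Longrightarrow> card A \<le> 2"
  by (metis card_2_iff card_mono card_1_singleton_iff finite.emptyI finite.insertI insert_absorb2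
        le_trans one_le_numeral order_refl card_insert_le)

lemma path_deg: assumes "is_path_graph V E" shows "\<forall>u\<in>V. card (nbhd V E u) \<le> 2"
proof
  fix u assume uV: "u \<in> V"
  obtain xs where xs: "distinct xs" "set xs = V"
    "\<And>u v. E u v \<longleftrightarrow> (\<exists>i. Suc i < length xs \<and> {u, v} = {xs ! i, xs ! Suc i})"
    using assms unfolding is_path_graph_def by blast
  obtain k where k: "k < length xs" "u = xs ! k" using uV xs(2) by (metis in_set_conv_nth)
  have "nbhd V E u \<subseteq> {xs ! (k - 1), xs ! Suc k}"
  proof
    fix y assume "y \<in> nbhd V E u"
    then have "E u y" unfolding nbhd_def by auto
    then obtain i where i: "Suc i < length xs" "{u, y} = {xs ! i, xs ! Suc i}" using xs(3) by blast
    then have "(u = xs ! i \<and> y = xs ! Suc i) \<or> (u = xs ! Suc i \<and> y = xs ! i)"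
      by (auto simp: doubleton_eq_iff)
    then show "y \<in> {xs ! (k - 1), xs ! Suc k}"
    proof
      assume a: "u = xs ! i \<and> y = xs ! Suc i"
      then have "i = k" using k xs(1) i(1) by (simp add: nth_eq_iff_index_eq)
      then show ?thesis using a by simp
    next
      assume a: "u = xs ! Suc i \<and> y = xs ! i"
      then have "Suc i = k" using k xs(1) i(1) by (simp add: nth_eq_iff_index_eq)
      then show ?thesis using a by auto
    qed
  qed
  then show "card (nbhd V E u) \<le> 2" by (rule card2)
qed

lemma cycle_deg: assumes "is_cycle_graph V E" shows "\<forall>u\<in>V. card (nbhd V E u) \<le> 2"
proof
  fix u assume uV: "u \<in> V"
  obtain xs where xs: "distinct xs" "set xs = V" "length xs \<ge> 3"
    "\<And>u v. E u v \<longleftrightarrow> ((\<exists>i. Suc i < length xs \<and> {u, v} = {xs ! i, xs ! Suc i}) \<or> {u, v} = {last xs, hd xs})"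
    using assms unfolding is_cycle_graph_def by blast
  have ne: "xs \<noteq> []" using xs(3) by auto
  have lst: "last xs = xs ! (length xs - 1)" and hd: "hd xs = xs ! 0" using ne by (auto simp: last_conv_nth hd_conv_nth)
  obtain k where k: "k < length xs" "u = xs ! k" using uV xs(2) by (metis in_set_conv_nth)
  have "nbhd V E u \<subseteq> {if k = 0 then last xs else xs ! (k - 1), if Suc k = length xs then hd xs else xs ! Suc k}"
  proof
    fix y assume "y \<in> nbhd V E u"
    then have "E u y" unfolding nbhd_def by auto
    then have "(\<exists>i. Suc i < length xs \<and> {u, y} = {xs ! i, xs ! Suc i}) \<or> {u, y} = {last xs, hd xs}" using xs(4) by blast
    then show "y \<in> {if k = 0 then last xs else xs ! (k - 1), if Suc k = length xs then hd xs else xs ! Suc k}"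
    proof
      assume "\<exists>i. Suc i < length xs \<and> {u, y} = {xs ! i, xs ! Suc i}"
      then obtain i where i: "Suc i < length xs" "{u, y} = {xs ! i, xs ! Suc i}" by blast
      then have "(u = xs ! i \<and> y = xs ! Suc i) \<or> (u = xs ! Suc i \<and> y = xs ! i)"
        by (auto simp: doubleton_eq_iff)
      then show ?thesis
      proof
        assume a: "u = xs ! i \<and> y = xs ! Suc i"
        then have "i = k" using k xs(1) i(1) by (simp add: nth_eq_iff_index_eq)
        then show ?thesis using a i(1) by simp
      next
        assume a: "u = xs ! Suc i \<and> y = xs ! i"
        then have "Suc i = k" using k xs(1) i(1) by (simp add: nth_eq_iff_index_eq)
        then show ?thesis using a by auto
      qed
    next
      assume "{u, y} = {last xs, hd xs}"
      then have "(u = last xs \<and> y = hd xs) \<or> (u = hd xs \<and> y = last xs)"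
        by (auto simp: doubleton_eq_iff)
      then show ?thesis
      proof
        assume a: "u = last xs \<and> y = hd xs"
        then have "k = length xs - 1" using k xs(1) lst ne by (simp add: nth_eq_iff_index_eq)
        then show ?thesis using a ne by auto
      next
        assume a: "u = hd xs \<and> y = last xs"
        then have "k = 0" using k xs(1) hd ne by (simp add: nth_eq_iff_index_eq)
        then show ?thesis using a by auto
      qed
    qed
  qed
  then show "card (nbhd V E u) \<le> 2" by (rule card2)
qed

definition walk where
  "walk xs \<longleftrightarrow> distinct xs \<and> set xs \<subseteq> V \<and> (\<forall>i. Suc i < length xs \<longrightarrow> E (xs ! i) (xs ! Suc i))"

lemma deg2_pc:
  assumes deg: "\<forall>v\<in>V. card (nbhd V E v) \<le> 2"
  shows "is_path_graph V E \<or> is_cycle_graph V E"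
proof -
  obtain v0 where v0: "v0 \<in> V" using n3 by fastforce
  have w0: "walk [v0]" unfolding walk_def using v0 by auto
  have bound: "\<forall>ys. walk ys \<longrightarrow> length ys < card V + 1"
  proof (intro allI impI)
    fix ys assume "walk ys"
    then have "distinct ys" "set ys \<subseteq> V" unfolding walk_def by auto
    then have "length ys \<le> card V" using fin by (metis card_mono distinct_card)
    then show "length ys < card V + 1" by simp
  qed
  obtain xs where xs: "walk xs" and mx: "\<And>ys. walk ys \<Longrightarrow> length ys \<le> length xs"
    using ex_has_greatest_nat[of walk "[v0]" length "card V + 1", OF w0 bound] by blast
  define L where "L = length xs"
  have dist: "distinct xs" and sub: "set xs \<subseteq> V" and step: "\<And>i. Suc i < L \<Longrightarrow> E (xs ! i) (xs ! Suc i)"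
    using xs unfolding walk_def L_def by auto
  have L1: "L \<ge> 1" using mx[OF w0] unfolding L_def by simp
  have front: "y \<in> set xs" if e: "E (xs ! 0) y" for y
  proof (rule ccontr)
    assume ny: "y \<notin> set xs"
    have "walk (y # xs)" unfolding walk_def
    proof (intro conjI allI impI)
      show "distinct (y # xs)" using ny dist by simp
      show "set (y # xs) \<subseteq> V" using sub EV e by auto
      fix i assume i: "Suc i < length (y # xs)"
      show "E ((y # xs) ! i) ((y # xs) ! Suc i)"
      proof (cases i)
        case 0 then show ?thesis using Esym e by simp
      next
        case (Suc j) then show ?thesis using step i unfolding L_def by simp
      qed
    qed
    then show False using mx by fastforce
  qed
  have bk: "y \<in> set xs" if e: "E (xs ! (L - 1)) y" for y
  proof (rule ccontr)
    assume ny: "y \<notin> set xs"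
    have "walk (xs @ [y])" unfolding walk_def
    proof (intro conjI allI impI)
      show "distinct (xs @ [y])" using ny dist by simp
      show "set (xs @ [y]) \<subseteq> V" using sub EV e by auto
      fix i assume i: "Suc i < length (xs @ [y])"
      show "E ((xs @ [y]) ! i) ((xs @ [y]) ! Suc i)"
      proof (cases "Suc i < L")
        case True then show ?thesis using step unfolding L_def by (simp add: nth_append)
      next
        case False
        then have "i = L - 1" using i unfolding L_def by simp
        then show ?thesis using e L1 unfolding L_def by (simp add: nth_append)
      qed
    qed
    then show False using mx by fastforce
  qed
  have inner: "y = xs ! (i - 1) \<or> y = xs ! Suc i" if ii: "0 < i" "Suc i < L" "E (xs ! i) y" for i y
  proof (rule ccontr)
    assume ny: "\<not> (y = xs ! (i - 1) \<or> y = xs ! Suc i)"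
    have e1: "E (xs ! i) (xs ! (i - 1))" using step[of "i - 1"] ii Esym by simp
    have e2: "E (xs ! i) (xs ! Suc i)" using step ii by simp
    have "xs ! (i - 1) \<noteq> xs ! Suc i" using dist ii unfolding L_def by (simp add: nth_eq_iff_index_eq)
    then have c3: "card {xs ! (i - 1), xs ! Suc i, y} = 3" using ny by auto
    have "{xs ! (i - 1), xs ! Suc i, y} \<subseteq> nbhd V E (xs ! i)" using e1 e2 ii(3) EV unfolding nbhd_def by auto
    then have "card {xs ! (i - 1), xs ! Suc i, y} \<le> card (nbhd V E (xs ! i))" using nbhd_fin by (intro card_mono) auto
    moreover have "xs ! i \<in> V" using e2 EV by auto
    ultimately show False using deg c3 by fastforce
  qed
  have closed: "\<forall>u\<in>set xs. \<forall>y. E u y \<longrightarrow> y \<in> set xs"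
  proof (intro ballI allI impI)
    fix u y assume u: "u \<in> set xs" and e: "E u y"
    obtain i where i: "i < L" "u = xs ! i" using u unfolding L_def by (metis in_set_conv_nth)
    show "y \<in> set xs"
    proof (cases "i = 0")
      case True then show ?thesis using front e i by simp
    next
      case False
      show ?thesis
      proof (cases "i = L - 1")
        case True then show ?thesis using bk e i by simp
      next
        case False
        then have "Suc i < L" using i by linarith
        then have "y = xs ! (i - 1) \<or> y = xs ! Suc i" using inner[of i y] \<open>i \<noteq> 0\<close> e i by simp
        then show ?thesis using \<open>Suc i < L\<close> unfolding L_def by auto
      qed
    qed
  qed
  have setV: "set xs = V" using closed_all[OF sub _ closed] L1 unfolding L_def by (metis One_nat_def Suc_le_lessD nth_mem)
  have L3: "L \<ge> 3" using setV n3 dist distinct_card unfolding L_def by metis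
  have ne: "xs \<noteq> []" using L3 unfolding L_def by auto
  have lst: "last xs = xs ! (L - 1)" and hd: "hd xs = xs ! 0" using ne unfolding L_def by (auto simp: last_conv_nth hd_conv_nth)
  have consecE: "E u y" if c: "\<exists>i. Suc i < length xs \<and> {u, y} = {xs ! i, xs ! Suc i}" for u y
  proof -
    obtain i where i: "Suc i < L" "{u, y} = {xs ! i, xs ! Suc i}" using c unfolding L_def by blast
    then have "(u = xs ! i \<and> y = xs ! Suc i) \<or> (u = xs ! Suc i \<and> y = xs ! i)"
      by (auto simp: doubleton_eq_iff)
    then show ?thesis using step[OF i(1)] Esym by blast
  qed
  have classify: "(\<exists>i. Suc i < length xs \<and> {u, y} = {xs ! i, xs ! Suc i}) \<or> {u, y} = {last xs, hd xs}"
    if e: "E u y" for u y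
  proof -
    have "u \<in> set xs" "y \<in> set xs" using e EV setV by auto
    then obtain i j where ij: "i < L" "u = xs ! i" "j < L" "y = xs ! j" unfolding L_def by (metis in_set_conv_nth)
    have "i \<noteq> j" using ij e EV by auto
    show ?thesis
    proof (cases "0 < i \<and> Suc i < L")
      case True
      then have "y = xs ! (i - 1) \<or> y = xs ! Suc i" using inner e ij by blast
      then show ?thesis
      proof
        assume "y = xs ! (i - 1)"
        then have "Suc (i - 1) < length xs \<and> {u, y} = {xs ! (i - 1), xs ! Suc (i - 1)}"
          using True ij unfolding L_def by auto
        then show ?thesis by blast
      next
        assume "y = xs ! Suc i"
        then show ?thesis using True ij unfolding L_def by blast
      qed
    next
      case False
      note Fi = False
      show ?thesis
      proof (cases "0 < j \<and> Suc j < L")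
        case True
        then have "u = xs ! (j - 1) \<or> u = xs ! Suc j" using inner Esym[OF e] ij by blast
        then show ?thesis
        proof
          assume "u = xs ! (j - 1)"
          then have "Suc (j - 1) < length xs \<and> {u, y} = {xs ! (j - 1), xs ! Suc (j - 1)}"
            using True ij unfolding L_def by auto
          then show ?thesis by blast
        next
          assume "u = xs ! Suc j"
          then have "Suc j < length xs \<and> {u, y} = {xs ! j, xs ! Suc j}"
            using True ij unfolding L_def by auto
          then show ?thesis by blast
        qed
      next
        case False
        then have "(i = 0 \<and> j = L - 1) \<or> (i = L - 1 \<and> j = 0)" using Fi ij \<open>i \<noteq> j\<close> by auto
        then have "{u, y} = {last xs, hd xs}" using ij lst hd by auto
        then show ?thesis by blast
      qed
    qed
  qed
  show ?thesis
  proof (cases "E (hd xs) (last xs)")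
    case True
    have "is_cycle_graph V E" unfolding is_cycle_graph_def
    proof (intro exI[of _ xs] conjI allI)
      show "distinct xs" "set xs = V" by (fact dist, fact setV)
      show "3 \<le> length xs" using L3 unfolding L_def .
      fix u y
      show "E u y \<longleftrightarrow> ((\<exists>i. Suc i < length xs \<and> {u, y} = {xs ! i, xs ! Suc i}) \<or> {u, y} = {last xs, hd xs})"
      proof
        assume "E u y" then show "(\<exists>i. Suc i < length xs \<and> {u, y} = {xs ! i, xs ! Suc i}) \<or> {u, y} = {last xs, hd xs}"
          by (rule classify)
      next
        assume "(\<exists>i. Suc i < length xs \<and> {u, y} = {xs ! i, xs ! Suc i}) \<or> {u, y} = {last xs, hd xs}"
        then show "E u y"
        proof
          assume "\<exists>i. Suc i < length xs \<and> {u, y} = {xs ! i, xs ! Suc i}"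
          then show "E u y" by (rule consecE)
        next
          assume "{u, y} = {last xs, hd xs}"
          then have "(u = last xs \<and> y = hd xs) \<or> (u = hd xs \<and> y = last xs)" by (auto simp: doubleton_eq_iff)
          then show "E u y" using True Esym by blast
        qed
      qed
    qed
    then show ?thesis by blast
  next
    case False
    have "is_path_graph V E" unfolding is_path_graph_def
    proof (intro exI[of _ xs] conjI allI)
      show "distinct xs" "set xs = V" by (fact dist, fact setV)
      fix u y
      show "E u y \<longleftrightarrow> (\<exists>i. Suc i < length xs \<and> {u, y} = {xs ! i, xs ! Suc i})"
      proof
        assume e: "E u y"
        show "\<exists>i. Suc i < length xs \<and> {u, y} = {xs ! i, xs ! Suc i}"
        proof (rule ccontr)
          assume "\<not> ?thesis"
          then have "{u, y} = {last xs, hd xs}" using classify[OF e] by blast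
          then have "(u = last xs \<and> y = hd xs) \<or> (u = hd xs \<and> y = last xs)" by (auto simp: doubleton_eq_iff)
          then show False using e False Esym by blast
        qed
      next
        assume "\<exists>i. Suc i < length xs \<and> {u, y} = {xs ! i, xs ! Suc i}"
        then show "E u y" by (rule consecE)
      qed
    qed
    then show ?thesis by blast
  qed
qed

lemma part3: "qtR_number V E = card V \<longleftrightarrow> is_path_graph V E \<or> is_cycle_graph V E"
proof
  assume a: "qtR_number V E = card V"
  have "\<forall>v\<in>V. card (nbhd V E v) \<le> 2"
  proof (rule ccontr)
    assume "\<not> ?thesis"
    then obtain v where "v \<in> V" "card (nbhd V E v) \<ge> 3" by force
    then have "qtR_number V E \<le> card V - 1" by (rule deg3_lt)
    then show False using a n3 by linarith
  qed
  then show "is_path_graph V E \<or> is_cycle_graph V E" by (rule deg2_pc)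
next
  assume "is_path_graph V E \<or> is_cycle_graph V E"
  then have deg: "\<forall>v\<in>V. card (nbhd V E v) \<le> 2" using path_deg cycle_deg by blast
  obtain f where f: "qtrdf V E f" "weight V f = qtR_number V E" using qtR_ex by blast
  have "weight V f \<ge> card V" by (rule deg2_ge[OF deg f(1)])
  then show "qtR_number V E = card V" using f(2) qtR_le_n by linarith
qed

end

theorem mainTheorem7:
  fixes V :: "'a set" and E :: "'a \<Rightarrow> 'a \<Rightarrow> bool"
  assumes "graph V E" and "connected_graph V E" and "card V \<ge> 3"
  shows "3 \<le> qtR_number V E \<and> qtR_number V E \<le> card V
    \<and> (qtR_number V E = 3 \<longleftrightarrow> max_degree V E = card V - 1)
    \<and> (qtR_number V E = 4 \<longleftrightarrow> domination_number V E = 2 \<and> total_domination_number V E = 2)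
    \<and> (qtR_number V E = card V \<longleftrightarrow> is_path_graph V E \<or> is_cycle_graph V E)"
proof -
  interpret G V E using assms by unfold_locales
  show ?thesis using qtR_ge3 qtR_le_n part1 part2 part3 by blast
qed

end
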